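(* Let $S$ be a memory system satisfying the Causality, Data Independence, Processor Symmetry and Location Symmetry assumptions, and let $n,m\ge1$. Suppose there is a simple witness $\Omega$ for $S(n,m)$ such that for every unambiguous trace $\tau$ of $S(n,m)$ and every $1\le k\le\min\{n,m\}$, the graph $G(\Omega)(\tau)$ does not have a canonical $k$-nice cycle. Then every trace of $S(n,m)$ is sequentially consistent.
   Context: Notation: $\mathbb{N}_n=\{1,\dots,n\}$, $\mathbb{W}_n=\{0,\dots,n\}$, $\mathbb{W}=\{0,1,2,\dots\}$. Memory events $E(n,m,v)=\{R,W\}\times\mathbb{N}_n\times\mathbb{N}_m\times\mathbb{W}_v$; for $e=\langle a,b,c,d\rangle$, $op(e)=a$, $proc(e)=b$, $loc(e)=c$, $data(e)=d$; $0$ models the initial value of every location. A memory system is a family $S=(S(n,m,v))_{n,m,v\ge1}$, $S(n,m,v)$ a regular set of finite runs over an alphabet $E^a(n,m,v)\supseteq E(n,m,v)$ (other letters are internal events); $S(n,m)=\bigcup_{v\ge1}S(n,m,v)$. The trace of a run is its subsequence of memory events; traces of $S(n,m,v)$ (resp. $S(n,m)$) are traces of its runs. For a sequence $\tau$ of memory events with positions $1,\dots,|\tau|$: $P(\tau,i)=\{k: proc(\tau(k))=i\}$, $L(\tau,j)=\{k: loc(\tau(k))=j\}$, $L^w(\tau,j)$, $L^r(\tau,j)$ the write/read positions in $L(\tau,j)$, $M(\tau,i)=\{\langle u,v\rangle: u,v\in P(\tau,i), u<v\}$. $\tau$ is unambiguous if for every $j$ and $x\in L^w(\tau,j)$, $data(\tau(x))\ne0$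 and $data(\tau(x))\ne data(\tau(y))$ for all $y\in L^w(\tau,j)\setminus\{x\}$. Assumptions. Causality: for all $n,m,v$, every trace $\tau$ of $S(n,m,v)$, every $j$ and $x\in L^r(\tau,j)$, either $data(\tau(x))=0$ or some $y\in L^w(\tau,j)$ has $data(\tau(y))=data(\tau(x))$. Data Independence: with renaming functions $\lambda:\mathbb{N}_m\times\mathbb{W}\to\mathbb{W}$, $\lambda(j,0)=0$, and $\lambda^d(\langle a,b,c,d\rangle)=\langle a,b,c,\lambda(c,d)\rangle$ letterwise, for all $n,m,v$ and $\tau\in E(n,m,v)^*$: $\tau$ is a trace of $S(n,m,v)$ iff $\tau=\lambda^d(\tau')$ for some unambiguous trace $\tau'$ of $S(n,m)$ and renaming function $\lambda$ with values in $\mathbb{W}_v$. Processor Symmetry: for all $n,m,v$, every permutation $\lambda$ of $\mathbb{N}_n$ and trace $\tau$ of $S(n,m,v)$, $\lambda^p(\tau)$ is a trace of $S(n,m,v)$, where $\lambda^p(\langle a,b,c,d\rangle)=\langle a,\lambda(b),c,d\rangle$ letterwise. Location Symmetry: likewise for permutations $\lambda$ of $\mathbb{N}_m$ and $\lambda^l(\langle a,b,c,d\rangle)=\langle a,b,\lambda(c),d\rangle$. Sequential consistency: $\tau$ is serial if for every position $u$, with $upto(\tau,u)=\{k\le u: op(\tau(k))=W, loc(\tau(k))=loc(\tau(u))\}$, $data(\tau(u))=0$ when $upto(\tau,u)=\emptyset$, else $data(\tau(u))=data(\tau(\max upto(\tau,u)))$. $\tau$ is sequentially consistent if some permutation $f$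 of $\mathbb{N}_{|\tau|}$ satisfies (C1) $\langle u,v\rangle\in M(\tau,i)$ implies $f(u)<f(v)$, and (C2) $\tau_{f^{-1}(1)}\cdots\tau_{f^{-1}(|\tau|)}$ is serial. Witnesses: a witness $\Omega$ for $S(n,m)$ assigns to each trace $\tau$ and location $j$ a strict total order $\Omega(\tau,j)$ on $L^w(\tau,j)$; it is simple if $\langle x,y\rangle\in\Omega(\tau,j)$ iff $x<y$. For unambiguous $\tau$: $\langle x,y\rangle\in\Omega^e(\tau,j)$ (for $x,y\in L(\tau,j)$) iff (1) $data(\tau(x))=data(\tau(y))$, $op(\tau(x))=W$, $op(\tau(y))=R$; or (2) $data(\tau(x))=0\ne data(\tau(y))$; or (3) some $a,b\in L^w(\tau,j)$ have $\langle a,b\rangle\in\Omega(\tau,j)$, $data(\tau(a))=data(\tau(x))$, $data(\tau(b))=data(\tau(y))$. $G(\Omega)(\tau)$ is the directed graph on $\{1,\dots,|\tau|\}$ with edges $\bigcup_iM(\tau,i)\cup\bigcup_j\Omega^e(\tau,j)$. For $k\ge1$, $x\oplus1=x+1$ for $x<k$ and $k\oplus1=1$. A canonical $k$-nice cycle in $G(\Omega)(\tau)$ is a sequence $u_1,v_1,\dots,u_k,v_k$ of pairwise distinct vertices with $\langle u_x,v_x\rangle\in M(\tau,x)$ and $\langle v_x,u_{x\oplus1}\rangle\in\Omega^e(\tau,x\oplus1)$ for all $1\le x\le k$. *)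

theory Defs
  imports Main
begin

datatype mop = Rd | Wr

type_synonym event = "mop \<times> nat \<times> nat \<times> nat"

definition ev_op :: "event \<Rightarrow> mop" where "ev_op e = fst e"
definition ev_proc :: "event \<Rightarrow> nat" where "ev_proc e = fst (snd e)"
definition ev_loc :: "event \<Rightarrow> nat" where "ev_loc e = fst (snd (snd e))"
definition ev_data :: "event \<Rightarrow> nat" where "ev_data e = snd (snd (snd e))"

definition Ev :: "nat \<Rightarrow> nat \<Rightarrow> nat \<Rightarrow> event set" where
  "Ev n m v = {e. ev_proc e \<in> {1..n} \<and> ev_loc e \<in> {1..m} \<and> ev_data e \<le> v}"

datatype 'i letter = Mem event | Internal 'i

definition regular_on :: "'a set \<Rightarrow> 'a list set \<Rightarrow> bool" where
  "regular_on \<Sigma> L \<longleftrightarrow>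
     (\<exists>(Q::nat set) q0 \<delta> F. finite Q \<and> q0 \<in> Q \<and> F \<subseteq> Q \<and>
        (\<forall>q\<in>Q. \<forall>a\<in>\<Sigma>. \<delta> q a \<in> Q) \<and>
        L = {w \<in> lists \<Sigma>. fold (%a q. \<delta> q a) w q0 \<in> F})"

definition alphabet :: "(nat \<Rightarrow> nat \<Rightarrow> nat \<Rightarrow> 'i set) \<Rightarrow> nat \<Rightarrow> nat \<Rightarrow> nat \<Rightarrow> 'i letter set" where
  "alphabet I n m v = Mem ` Ev n m v \<union> Internal ` I n m v"

definition memory_system ::
  "(nat \<Rightarrow> nat \<Rightarrow> nat \<Rightarrow> 'i set) \<Rightarrow> (nat \<Rightarrow> nat \<Rightarrow> nat \<Rightarrow> 'i letter list set) \<Rightarrow> bool" where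
  "memory_system I S \<longleftrightarrow>
     (\<forall>n m v. n \<ge> 1 \<longrightarrow> m \<ge> 1 \<longrightarrow> v \<ge> 1 \<longrightarrow>
        finite (I n m v) \<and> S n m v \<subseteq> lists (alphabet I n m v) \<and>
        regular_on (alphabet I n m v) (S n m v))"

fun mem_events :: "'i letter list \<Rightarrow> event list" where
  "mem_events [] = []"
| "mem_events (Mem e # r) = e # mem_events r"
| "mem_events (Internal _ # r) = mem_events r"

definition traces :: "(nat \<Rightarrow> nat \<Rightarrow> nat \<Rightarrow> 'i letter list set) \<Rightarrow> nat \<Rightarrow> nat \<Rightarrow> nat \<Rightarrow> event list set" where
  "traces S n m v = mem_events ` S n m v"

definition traces_nm :: "(nat \<Rightarrow> nat \<Rightarrow> nat \<Rightarrow> 'i letter list set) \<Rightarrow> nat \<Rightarrow> nat \<Rightarrow> event list set" where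
  "traces_nm S n m = (\<Union>v\<in>{1..}. traces S n m v)"

section \<open>Position sets (positions are 0-based list indices)\<close>

definition Pp :: "event list \<Rightarrow> nat \<Rightarrow> nat set" where
  "Pp \<tau> i = {k. k < length \<tau> \<and> ev_proc (\<tau> ! k) = i}"
definition Lp :: "event list \<Rightarrow> nat \<Rightarrow> nat set" where
  "Lp \<tau> j = {k. k < length \<tau> \<and> ev_loc (\<tau> ! k) = j}"
definition Lw :: "event list \<Rightarrow> nat \<Rightarrow> nat set" where
  "Lw \<tau> j = {k \<in> Lp \<tau> j. ev_op (\<tau> ! k) = Wr}"
definition Lr :: "event list \<Rightarrow> nat \<Rightarrow> nat set" where
  "Lr \<tau> j = {k \<in> Lp \<tau> j. ev_op (\<tau> ! k) = Rd}"
definition Mp :: "event list \<Rightarrow> nat \<Rightarrow> (nat \<times> nat) set" where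
  "Mp \<tau> i = {(u, v). u \<in> Pp \<tau> i \<and> v \<in> Pp \<tau> i \<and> u < v}"

definition unambiguous :: "event list \<Rightarrow> bool" where
  "unambiguous \<tau> \<longleftrightarrow>
     (\<forall>j. \<forall>x\<in>Lw \<tau> j. ev_data (\<tau> ! x) \<noteq> 0 \<and>
        (\<forall>y\<in>Lw \<tau> j - {x}. ev_data (\<tau> ! x) \<noteq> ev_data (\<tau> ! y)))"

definition causality :: "(nat \<Rightarrow> nat \<Rightarrow> nat \<Rightarrow> 'i letter list set) \<Rightarrow> bool" where
  "causality S \<longleftrightarrow>
     (\<forall>n m v. n \<ge> 1 \<longrightarrow> m \<ge> 1 \<longrightarrow> v \<ge> 1 \<longrightarrow>
       (\<forall>\<tau>\<in>traces S n m v. \<forall>j. \<forall>x\<in>Lr \<tau> j.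
          ev_data (\<tau> ! x) = 0 \<or> (\<exists>y\<in>Lw \<tau> j. ev_data (\<tau> ! y) = ev_data (\<tau> ! x))))"

definition renaming :: "nat \<Rightarrow> nat \<Rightarrow> (nat \<Rightarrow> nat \<Rightarrow> nat) \<Rightarrow> bool" where
  "renaming m v r \<longleftrightarrow> (\<forall>j\<in>{1..m}. r j 0 = 0 \<and> (\<forall>d. r j d \<le> v))"

definition ren_data :: "(nat \<Rightarrow> nat \<Rightarrow> nat) \<Rightarrow> event \<Rightarrow> event" where
  "ren_data r e = (ev_op e, ev_proc e, ev_loc e, r (ev_loc e) (ev_data e))"

definition ren_proc :: "(nat \<Rightarrow> nat) \<Rightarrow> event \<Rightarrow> event" where
  "ren_proc r e = (ev_op e, r (ev_proc e), ev_loc e, ev_data e)"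

definition ren_loc :: "(nat \<Rightarrow> nat) \<Rightarrow> event \<Rightarrow> event" where
  "ren_loc r e = (ev_op e, ev_proc e, r (ev_loc e), ev_data e)"

definition data_independence :: "(nat \<Rightarrow> nat \<Rightarrow> nat \<Rightarrow> 'i letter list set) \<Rightarrow> bool" where
  "data_independence S \<longleftrightarrow>
     (\<forall>n m v. n \<ge> 1 \<longrightarrow> m \<ge> 1 \<longrightarrow> v \<ge> 1 \<longrightarrow>
       (\<forall>\<tau> \<in> lists (Ev n m v).
          \<tau> \<in> traces S n m v \<longleftrightarrow>
          (\<exists>\<tau>' r. \<tau>' \<in> traces_nm S n m \<and> unambiguous \<tau>' \<and> renaming m v r \<and>
                  \<tau> = map (ren_data r) \<tau>')))"

definition processor_symmetry :: "(nat \<Rightarrow> nat \<Rightarrow> nat \<Rightarrow> 'i letter list set) \<Rightarrow> bool" where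
  "processor_symmetry S \<longleftrightarrow>
     (\<forall>n m v. n \<ge> 1 \<longrightarrow> m \<ge> 1 \<longrightarrow> v \<ge> 1 \<longrightarrow>
       (\<forall>r \<tau>. bij_betw r {1..n} {1..n} \<longrightarrow> \<tau> \<in> traces S n m v \<longrightarrow>
          map (ren_proc r) \<tau> \<in> traces S n m v))"

definition location_symmetry :: "(nat \<Rightarrow> nat \<Rightarrow> nat \<Rightarrow> 'i letter list set) \<Rightarrow> bool" where
  "location_symmetry S \<longleftrightarrow>
     (\<forall>n m v. n \<ge> 1 \<longrightarrow> m \<ge> 1 \<longrightarrow> v \<ge> 1 \<longrightarrow>
       (\<forall>r \<tau>. bij_betw r {1..m} {1..m} \<longrightarrow> \<tau> \<in> traces S n m v \<longrightarrow>
          map (ren_loc r) \<tau> \<in> traces S n m v))"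

definition upto_set :: "event list \<Rightarrow> nat \<Rightarrow> nat set" where
  "upto_set \<tau> u = {k. k \<le> u \<and> ev_op (\<tau> ! k) = Wr \<and> ev_loc (\<tau> ! k) = ev_loc (\<tau> ! u)}"

definition serial :: "event list \<Rightarrow> bool" where
  "serial \<tau> \<longleftrightarrow>
     (\<forall>u < length \<tau>.
        (upto_set \<tau> u = {} \<longrightarrow> ev_data (\<tau> ! u) = 0) \<and>
        (upto_set \<tau> u \<noteq> {} \<longrightarrow> ev_data (\<tau> ! u) = ev_data (\<tau> ! Max (upto_set \<tau> u))))"

definition seq_consistent :: "event list \<Rightarrow> bool" where
  "seq_consistent \<tau> \<longleftrightarrow>
     (\<exists>f. bij_betw f {0..<length \<tau>} {0..<length \<tau>} \<and>
          (\<forall>i u v. (u, v) \<in> Mp \<tau> i \<longrightarrow> f u < f v) \<and>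
          serial (map (\<lambda>p. \<tau> ! the_inv_into {0..<length \<tau>} f p) [0..<length \<tau>]))"

definition witness ::
  "(nat \<Rightarrow> nat \<Rightarrow> nat \<Rightarrow> 'i letter list set) \<Rightarrow> nat \<Rightarrow> nat \<Rightarrow> (event list \<Rightarrow> nat \<Rightarrow> (nat \<times> nat) set) \<Rightarrow> bool" where
  "witness S n m \<Omega> \<longleftrightarrow>
     (\<forall>\<tau>\<in>traces_nm S n m. \<forall>j\<in>{1..m}.
        \<Omega> \<tau> j \<subseteq> Lw \<tau> j \<times> Lw \<tau> j \<and> irrefl (\<Omega> \<tau> j) \<and> trans (\<Omega> \<tau> j) \<and>
        total_on (Lw \<tau> j) (\<Omega> \<tau> j))"

definition simple_witness ::
  "(nat \<Rightarrow> nat \<Rightarrow> nat \<Rightarrow> 'i letter list set) \<Rightarrow> nat \<Rightarrow> nat \<Rightarrow> (event list \<Rightarrow> nat \<Rightarrow> (nat \<times> nat) set) \<Rightarrow> bool" where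
  "simple_witness S n m \<Omega> \<longleftrightarrow> witness S n m \<Omega> \<and>
     (\<forall>\<tau>\<in>traces_nm S n m. \<forall>j\<in>{1..m}. \<forall>x\<in>Lw \<tau> j. \<forall>y\<in>Lw \<tau> j.
        (x, y) \<in> \<Omega> \<tau> j \<longleftrightarrow> x < y)"

definition Omega_e :: "(event list \<Rightarrow> nat \<Rightarrow> (nat \<times> nat) set) \<Rightarrow> event list \<Rightarrow> nat \<Rightarrow> (nat \<times> nat) set" where
  "Omega_e \<Omega> \<tau> j = {(x, y). x \<in> Lp \<tau> j \<and> y \<in> Lp \<tau> j \<and>
     ((ev_data (\<tau> ! x) = ev_data (\<tau> ! y) \<and> ev_op (\<tau> ! x) = Wr \<and> ev_op (\<tau> ! y) = Rd) \<or>
      (ev_data (\<tau> ! x) = 0 \<and> ev_data (\<tau> ! y) \<noteq> 0) \<or>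
      (\<exists>a\<in>Lw \<tau> j. \<exists>b\<in>Lw \<tau> j. (a, b) \<in> \<Omega> \<tau> j \<and>
          ev_data (\<tau> ! a) = ev_data (\<tau> ! x) \<and> ev_data (\<tau> ! b) = ev_data (\<tau> ! y)))}"

definition G_edges :: "(event list \<Rightarrow> nat \<Rightarrow> (nat \<times> nat) set) \<Rightarrow> event list \<Rightarrow> (nat \<times> nat) set" where
  "G_edges \<Omega> \<tau> = (\<Union>i. Mp \<tau> i) \<union> (\<Union>j. Omega_e \<Omega> \<tau> j)"

definition succ_mod :: "nat \<Rightarrow> nat \<Rightarrow> nat" where
  "succ_mod k x = (if x < k then x + 1 else 1)"

definition canonical_nice_cycle ::
  "(event list \<Rightarrow> nat \<Rightarrow> (nat \<times> nat) set) \<Rightarrow> event list \<Rightarrow> nat \<Rightarrow> (nat \<Rightarrow> nat) \<Rightarrow> (nat \<Rightarrow> nat) \<Rightarrow> bool" where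
  "canonical_nice_cycle \<Omega> \<tau> k u v \<longleftrightarrow>
     inj_on u {1..k} \<and> inj_on v {1..k} \<and> u ` {1..k} \<inter> v ` {1..k} = {} \<and>
     (\<forall>x\<in>{1..k}. (u x, v x) \<in> Mp \<tau> x \<and> (v x, u (succ_mod k x)) \<in> Omega_e \<Omega> \<tau> (succ_mod k x))"

definition has_canonical_nice_cycle ::
  "(event list \<Rightarrow> nat \<Rightarrow> (nat \<times> nat) set) \<Rightarrow> event list \<Rightarrow> nat \<Rightarrow> bool" where
  "has_canonical_nice_cycle \<Omega> \<tau> k \<longleftrightarrow> (\<exists>u v. canonical_nice_cycle \<Omega> \<tau> k u v)"

end

theory Submission
  imports Defs
begin


definition cw :: "('c \<Rightarrow> ('v\<times>'v) set) \<Rightarrow> nat \<Rightarrow> (nat \<Rightarrow> 'v) \<Rightarrow> (nat \<Rightarrow> 'c) \<Rightarrow> bool" where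
 "cw R N x c \<longleftrightarrow> N \<ge> 1 \<and> (\<forall>i<N. (x i, x (Suc i mod N)) \<in> R (c i))"

lemma cw_rotate:
  assumes "cw R N x c"
  shows "cw R N (\<lambda>i. x ((i + r) mod N)) (\<lambda>i. c ((i + r) mod N))"
  unfolding cw_def
proof (intro conjI allI impI)
  show "N \<ge> 1" using assms by (simp add: cw_def)
  fix i assume "i < N"
  have N: "N > 0" using assms by (simp add: cw_def)
  have "(x ((i + r) mod N), x (Suc ((i + r) mod N) mod N)) \<in> R (c ((i + r) mod N))"
    using assms N by (simp add: cw_def)
  moreover have "Suc ((i + r) mod N) mod N = (Suc i + r) mod N"
    by (simp add: mod_Suc_eq)
  ultimately show "(x ((i + r) mod N), x ((Suc i mod N + r) mod N)) \<in> R (c ((i + r) mod N))"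
    by (simp add: mod_add_left_eq)
qed

lemma cw_shortcut0:
  assumes cw: "cw R N x c" and j: "1 \<le> j" "j < N" and cj: "c j = c 0"
    and sc: "\<And>a b a' b'. (a,b) \<in> R (c 0) \<Longrightarrow> (a',b') \<in> R (c 0) \<Longrightarrow> (a,b') \<in> R (c 0) \<or> (a',b) \<in> R (c 0)"
  shows "\<exists>N' x' c'. cw R N' x' c' \<and> N' < N"
proof -
  have e: "\<And>i. i < N \<Longrightarrow> (x i, x (Suc i mod N)) \<in> R (c i)" using cw by (simp add: cw_def)
  have e0: "(x 0, x 1) \<in> R (c 0)" using e[of 0] j by simp
  have ej: "(x j, x (Suc j mod N)) \<in> R (c 0)" using e[of j] j cj by simp
  from sc[OF e0 ej] show ?thesis
  proof
    assume A: "(x 0, x (Suc j mod N)) \<in> R (c 0)"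
    define x' where "x' = (\<lambda>t. if t = 0 then x 0 else x (t + j))"
    define c' where "c' = (\<lambda>t. if t = 0 then c 0 else c (t + j))"
    have "cw R (N - j) x' c'"
      unfolding cw_def
    proof (intro conjI allI impI)
      show "1 \<le> N - j" using j by simp
      fix t assume t: "t < N - j"
      show "(x' t, x' (Suc t mod (N - j))) \<in> R (c' t)"
      proof (cases "t = 0")
        case True
        then show ?thesis
        proof (cases "N - j = 1")
          case True
          then have "Suc j = N" using j by simp
          then have "Suc j mod N = 0" by simp
          then show ?thesis using A True \<open>t = 0\<close> by (simp add: x'_def c'_def)
        next
          case False
          then have "Suc j mod N = Suc j" using j by simp
          then show ?thesis using A False \<open>t = 0\<close> t by (simp add: x'_def c'_def)
        qed
      next
        case False
        have et: "(x (t + j), x (Suc (t + j) mod N)) \<in> R (c (t + j))" using e[of "t+j"] t by simp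
        show ?thesis
        proof (cases "Suc t < N - j")
          case True
          then show ?thesis using et False by (simp add: x'_def c'_def)
        next
          case F2: False
          then have "Suc t = N - j" using t by simp
          then have "Suc (t + j) = N" using j by simp
          then show ?thesis using et False F2 \<open>Suc t = N - j\<close> by (simp add: x'_def c'_def)
        qed
      qed
    qed
    then show ?thesis using j by (intro exI[of _ "N - j"] exI[of _ x'] exI[of _ c']) simp
  next
    assume B: "(x j, x 1) \<in> R (c 0)"
    define x' where "x' = (\<lambda>t. x (Suc t))"
    define c' where "c' = (\<lambda>t. c (Suc t))"
    have "cw R j x' c'"
      unfolding cw_def
    proof (intro conjI allI impI)
      show "1 \<le> j" using j by simp
      fix t assume t: "t < j"
      show "(x' t, x' (Suc t mod j)) \<in> R (c' t)"
      proof (cases "Suc t < j")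
        case True
        then show ?thesis using e[of "Suc t"] j by (simp add: x'_def c'_def)
      next
        case False
        then have "Suc t = j" using t by simp
        then show ?thesis using B cj by (simp add: x'_def c'_def)
      qed
    qed
    then show ?thesis using j by blast
  qed
qed

lemma cw_shortcut:
  assumes cw: "cw R N x c" and ij: "i < j" "j < N" and cj: "c j = c i"
    and sc: "\<And>a b a' b'. (a,b) \<in> R (c i) \<Longrightarrow> (a',b') \<in> R (c i) \<Longrightarrow> (a,b') \<in> R (c i) \<or> (a',b) \<in> R (c i)"
  shows "\<exists>N' x' c'. cw R N' x' c' \<and> N' < N"
proof -
  let ?x = "\<lambda>t. x ((t + i) mod N)" and ?c = "\<lambda>t. c ((t + i) mod N)"
  have "cw R N ?x ?c" by (rule cw_rotate[OF cw])
  moreover have "?c (j - i) = ?c 0" using ij cj by simp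
  moreover have "?c 0 = c i" using ij by simp
  ultimately show ?thesis
    using cw_shortcut0[of R N ?x ?c "j - i"] ij sc by simp
qed

lemma cw_min:
  assumes "cw R N x c"
  shows "\<exists>N x c. cw R N x c \<and> (\<forall>N' x' c'. cw R N' x' c' \<longrightarrow> N \<le> N')"
proof -
  let ?P = "\<lambda>N. \<exists>x c. cw R N x c"
  have "?P N" using assms by blast
  then have "?P (LEAST N. ?P N)" by (rule LeastI)
  moreover have "\<forall>N' x' c'. cw R N' x' c' \<longrightarrow> (LEAST N. ?P N) \<le> N'"
    by (blast intro: Least_le)
  ultimately show ?thesis by blast
qed

lemma cw_min_inj:
  assumes cw: "cw R N x c" and mn: "\<forall>N' x' c'. cw R N' x' c' \<longrightarrow> N \<le> N'"
    and sc: "\<And>d a b a' b'. (a,b) \<in> R d \<Longrightarrow> (a',b') \<in> R d \<Longrightarrow> (a,b') \<in> R d \<or> (a',b) \<in> R d"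
  shows "inj_on c {0..<N}"
proof (rule inj_onI, rule ccontr)
  fix i j assume i: "i \<in> {0..<N}" and j: "j \<in> {0..<N}" and eq: "c i = c j" and ne: "i \<noteq> j"
  show False
  proof (cases "i < j")
    case True
    then show False using cw_shortcut[OF cw True, of ] j eq sc mn by force
  next
    case False
    then have "j < i" using ne by simp
    then show False using cw_shortcut[OF cw \<open>j < i\<close>] i eq sc mn by force
  qed
qed



lemma mop_neq_Wr[simp]: "(a \<noteq> Wr) = (a = Rd)" by (cases a) auto

lemma mem_events_set: "r \<in> lists (alphabet I n m v) \<Longrightarrow> set (mem_events r) \<subseteq> Ev n m v"
  by (induction r rule: mem_events.induct) (auto simp: alphabet_def)

definition causal :: "event list \<Rightarrow> bool" where
  "causal \<tau> \<longleftrightarrow> (\<forall>j. \<forall>x\<in>Lr \<tau> j. ev_data (\<tau> ! x) = 0 \<or> (\<exists>y\<in>Lw \<tau> j. ev_data (\<tau> ! y) = ev_data (\<tau> ! x)))"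

definition rank :: "event list \<Rightarrow> nat \<Rightarrow> nat" where
  "rank \<tau> x = (if ev_data (\<tau> ! x) = 0 then 0 else
     Suc (THE w. w \<in> Lw \<tau> (ev_loc (\<tau> ! x)) \<and> ev_data (\<tau> ! w) = ev_data (\<tau> ! x)))"

definition key :: "event list \<Rightarrow> nat \<Rightarrow> nat" where
  "key \<tau> x = 2 * rank \<tau> x + (if ev_op (\<tau> ! x) = Wr then 0 else 1)"

definition Ed :: "event list \<Rightarrow> (nat \<times> nat) set" where
  "Ed \<tau> = {(a,b). a < length \<tau> \<and> b < length \<tau> \<and>
     ((ev_proc (\<tau> ! a) = ev_proc (\<tau> ! b) \<and> a < b) \<or>
      (ev_loc (\<tau> ! a) = ev_loc (\<tau> ! b) \<and> key \<tau> a < key \<tau> b))}"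

lemma exists_write:
  assumes "causal \<tau>" "x \<in> Lp \<tau> j" "ev_data (\<tau> ! x) \<noteq> 0"
  shows "\<exists>w\<in>Lw \<tau> j. ev_data (\<tau> ! w) = ev_data (\<tau> ! x)"
proof (cases "ev_op (\<tau> ! x) = Wr")
  case True
  then show ?thesis using assms by (auto simp: Lw_def)
next
  case False
  then have "x \<in> Lr \<tau> j" using assms by (auto simp: Lr_def)
  then have "ev_data (\<tau> ! x) = 0 \<or> (\<exists>y\<in>Lw \<tau> j. ev_data (\<tau> ! y) = ev_data (\<tau> ! x))"
    using assms(1) unfolding causal_def by blast
  then show ?thesis using assms(3) by blast
qed

lemma unamb_nz: "unambiguous \<tau> \<Longrightarrow> w \<in> Lw \<tau> j \<Longrightarrow> ev_data (\<tau> ! w) \<noteq> 0"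
  unfolding unambiguous_def by blast

lemma rank_eq:
  assumes U: "unambiguous \<tau>" and w: "w \<in> Lw \<tau> (ev_loc (\<tau> ! x))"
    and d: "ev_data (\<tau> ! w) = ev_data (\<tau> ! x)"
  shows "rank \<tau> x = Suc w"
proof -
  have nz: "ev_data (\<tau> ! x) \<noteq> 0" using unamb_nz[OF U w] d by simp
  have "(THE w. w \<in> Lw \<tau> (ev_loc (\<tau> ! x)) \<and> ev_data (\<tau> ! w) = ev_data (\<tau> ! x)) = w"
  proof (rule the_equality)
    show "w \<in> Lw \<tau> (ev_loc (\<tau> ! x)) \<and> ev_data (\<tau> ! w) = ev_data (\<tau> ! x)" using w d by simp
    fix w' assume h: "w' \<in> Lw \<tau> (ev_loc (\<tau> ! x)) \<and> ev_data (\<tau> ! w') = ev_data (\<tau> ! x)"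
    show "w' = w"
    proof (rule ccontr)
      assume "w' \<noteq> w"
      then have "w \<in> Lw \<tau> (ev_loc (\<tau> ! x)) - {w'}" using w by simp
      then show False using U h d unfolding unambiguous_def by metis
    qed
  qed
  then show ?thesis using nz by (simp add: rank_def)
qed

lemma rank_write:
  assumes U: "unambiguous \<tau>" "w < length \<tau>" "ev_op (\<tau> ! w) = Wr"
  shows "rank \<tau> w = Suc w"
  using assms by (intro rank_eq) (auto simp: Lw_def Lp_def)

lemma Lp_loc: "x \<in> Lp \<tau> j \<Longrightarrow> ev_loc (\<tau> ! x) = j" by (simp add: Lp_def)

lemma Oe_char:
  assumes U: "unambiguous \<tau>" and C: "causal \<tau>"
    and Om: "\<Omega> \<tau> j = {(a,b). a \<in> Lw \<tau> j \<and> b \<in> Lw \<tau> j \<and> a < b}"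
  shows "Omega_e \<Omega> \<tau> j = {(x,y). x \<in> Lp \<tau> j \<and> y \<in> Lp \<tau> j \<and> key \<tau> x < key \<tau> y}"
proof -
  have main: "((ev_data (\<tau> ! x) = ev_data (\<tau> ! y) \<and> ev_op (\<tau> ! x) = Wr \<and> ev_op (\<tau> ! y) = Rd) \<or>
      (ev_data (\<tau> ! x) = 0 \<and> ev_data (\<tau> ! y) \<noteq> 0) \<or>
      (\<exists>a\<in>Lw \<tau> j. \<exists>b\<in>Lw \<tau> j. (a, b) \<in> \<Omega> \<tau> j \<and>
          ev_data (\<tau> ! a) = ev_data (\<tau> ! x) \<and> ev_data (\<tau> ! b) = ev_data (\<tau> ! y)))
     \<longleftrightarrow> key \<tau> x < key \<tau> y" if x: "x \<in> Lp \<tau> j" and y: "y \<in> Lp \<tau> j" for x y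
  proof -
    have lx: "ev_loc (\<tau> ! x) = j" and ly: "ev_loc (\<tau> ! y) = j" using x y by (auto simp: Lp_def)
    have rk: "rank \<tau> z = Suc w" if "w \<in> Lw \<tau> j" "ev_data (\<tau> ! w) = ev_data (\<tau> ! z)" "ev_loc (\<tau> ! z) = j" for z w
      using rank_eq[OF U, of w z] that by simp
    have r0: "rank \<tau> z = 0" if "ev_data (\<tau> ! z) = 0" for z using that by (simp add: rank_def)
    show ?thesis
    proof (cases "ev_data (\<tau> ! x) = 0")
      case x0: True
      show ?thesis
      proof (cases "ev_data (\<tau> ! y) = 0")
        case y0: True
        have "\<not> (\<exists>a\<in>Lw \<tau> j. ev_data (\<tau> ! a) = ev_data (\<tau> ! x))" using x0 unamb_nz[OF U] by metis
        then show ?thesis using x0 y0 r0[OF x0] r0[OF y0] by (auto simp: key_def)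
      next
        case y1: False
        obtain wy where wy: "wy \<in> Lw \<tau> j" "ev_data (\<tau> ! wy) = ev_data (\<tau> ! y)"
          using exists_write[OF C y y1] by blast
        have "\<not> (\<exists>a\<in>Lw \<tau> j. ev_data (\<tau> ! a) = ev_data (\<tau> ! x))" using x0 unamb_nz[OF U] by metis
        then show ?thesis using x0 y1 r0[OF x0] rk[OF wy ly] by (auto simp: key_def)
      qed
    next
      case x1: False
      obtain wx where wx: "wx \<in> Lw \<tau> j" "ev_data (\<tau> ! wx) = ev_data (\<tau> ! x)"
        using exists_write[OF C x x1] by blast
      have rx: "rank \<tau> x = Suc wx" using rk[OF wx lx] .
      show ?thesis
      proof (cases "ev_data (\<tau> ! y) = 0")
        case y0: True
        have "\<not> (\<exists>b\<in>Lw \<tau> j. ev_data (\<tau> ! b) = ev_data (\<tau> ! y))" using y0 unamb_nz[OF U] by metis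
        then show ?thesis using x1 y0 rx r0[OF y0] by (auto simp: key_def)
      next
        case y1: False
        obtain wy where wy: "wy \<in> Lw \<tau> j" "ev_data (\<tau> ! wy) = ev_data (\<tau> ! y)"
          using exists_write[OF C y y1] by blast
        have ry: "rank \<tau> y = Suc wy" using rk[OF wy ly] .
        have uniq: "a = wx" if "a \<in> Lw \<tau> j" "ev_data (\<tau> ! a) = ev_data (\<tau> ! x)" for a
          using rk[OF that lx] rx by simp
        have uniqy: "b = wy" if "b \<in> Lw \<tau> j" "ev_data (\<tau> ! b) = ev_data (\<tau> ! y)" for b
          using rk[OF that ly] ry by simp
        have xw: "ev_op (\<tau> ! x) = Wr \<Longrightarrow> wx = x"
          using uniq[of x] x by (simp add: Lw_def)
        show ?thesis
        proof
          assume "(ev_data (\<tau> ! x) = ev_data (\<tau> ! y) \<and> ev_op (\<tau> ! x) = Wr \<and> ev_op (\<tau> ! y) = Rd) \<or>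
            (ev_data (\<tau> ! x) = 0 \<and> ev_data (\<tau> ! y) \<noteq> 0) \<or>
            (\<exists>a\<in>Lw \<tau> j. \<exists>b\<in>Lw \<tau> j. (a, b) \<in> \<Omega> \<tau> j \<and>
              ev_data (\<tau> ! a) = ev_data (\<tau> ! x) \<and> ev_data (\<tau> ! b) = ev_data (\<tau> ! y))"
          then show "key \<tau> x < key \<tau> y"
          proof (elim disjE)
            assume h: "ev_data (\<tau> ! x) = ev_data (\<tau> ! y) \<and> ev_op (\<tau> ! x) = Wr \<and> ev_op (\<tau> ! y) = Rd"
            then have "wy = wx" using uniqy[of wx] wx by simp
            then show ?thesis using h rx ry by (simp add: key_def)
          next
            assume "ev_data (\<tau> ! x) = 0 \<and> ev_data (\<tau> ! y) \<noteq> 0" then show ?thesis using x1 by simp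
          next
            assume "\<exists>a\<in>Lw \<tau> j. \<exists>b\<in>Lw \<tau> j. (a, b) \<in> \<Omega> \<tau> j \<and>
              ev_data (\<tau> ! a) = ev_data (\<tau> ! x) \<and> ev_data (\<tau> ! b) = ev_data (\<tau> ! y)"
            then obtain a b where ab: "a \<in> Lw \<tau> j" "b \<in> Lw \<tau> j" "a < b"
              "ev_data (\<tau> ! a) = ev_data (\<tau> ! x)" "ev_data (\<tau> ! b) = ev_data (\<tau> ! y)"
              using Om by auto
            then have "a = wx" "b = wy" using uniq uniqy by auto
            then show ?thesis using ab rx ry by (simp add: key_def)
          qed
        next
          assume k: "key \<tau> x < key \<tau> y"
          consider "wx < wy" | "wx = wy" | "wy < wx" by linarith
          then show "(ev_data (\<tau> ! x) = ev_data (\<tau> ! y) \<and> ev_op (\<tau> ! x) = Wr \<and> ev_op (\<tau> ! y) = Rd) \<or>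
            (ev_data (\<tau> ! x) = 0 \<and> ev_data (\<tau> ! y) \<noteq> 0) \<or>
            (\<exists>a\<in>Lw \<tau> j. \<exists>b\<in>Lw \<tau> j. (a, b) \<in> \<Omega> \<tau> j \<and>
              ev_data (\<tau> ! a) = ev_data (\<tau> ! x) \<and> ev_data (\<tau> ! b) = ev_data (\<tau> ! y))"
          proof cases
            case 1 then show ?thesis using wx wy Om by auto
          next
            case 2
            then have "ev_op (\<tau> ! x) = Wr \<and> ev_op (\<tau> ! y) = Rd"
              using k rx ry by (auto simp: key_def split: if_splits)
            then show ?thesis using 2 wx wy by simp
          next
            case 3 then show ?thesis using k rx ry by (simp add: key_def split: if_splits)
          qed
        qed
      qed
    qed
  qed
  show ?thesis
  proof (rule set_eqI)
    fix p :: "nat \<times> nat"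
    obtain x y where p: "p = (x, y)" by (cases p)
    show "p \<in> Omega_e \<Omega> \<tau> j \<longleftrightarrow> p \<in> {(x,y). x \<in> Lp \<tau> j \<and> y \<in> Lp \<tau> j \<and> key \<tau> x < key \<tau> y}"
      unfolding p Omega_e_def mem_Collect_eq prod.case
      using main[of x y] by blast
  qed
qed



lemma topo_list:
  assumes "finite V" "acyclic E" "E \<subseteq> V \<times> V"
  shows "\<exists>xs. distinct xs \<and> set xs = V \<and>
           (\<forall>i<length xs. \<forall>j<length xs. (xs ! i, xs ! j) \<in> E \<longrightarrow> i < j)"
  using assms
proof (induction "card V" arbitrary: V E)
  case 0
  then have "V = {}" by simp
  then show ?case by (intro exI[of _ "[]"]) simp
next
  case (Suc k)
  then have "V \<noteq> {}" by auto
  then obtain v0 where "v0 \<in> V" by blast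
  have fE: "finite E" using Suc.prems finite_subset[of E "V \<times> V"] by auto
  have "wf (E\<inverse>)" by (rule finite_acyclic_wf_converse[OF fE Suc.prems(2)])
  then obtain z where z: "z \<in> V" "\<forall>y. (y, z) \<in> E\<inverse> \<longrightarrow> y \<notin> V"
    using \<open>v0 \<in> V\<close> unfolding wf_eq_minimal by blast
  have noout: "(z, y) \<notin> E" for y using z Suc.prems(3) by blast
  define V' where "V' = V - {z}"
  define E' where "E' = E \<inter> (V' \<times> V')"
  have "k = card V'" using Suc.hyps(2) z Suc.prems(1) by (simp add: V'_def)
  moreover have "finite V'" using Suc.prems(1) by (simp add: V'_def)
  moreover have "acyclic E'" using acyclic_subset[OF Suc.prems(2)] by (simp add: E'_def)
  moreover have "E' \<subseteq> V' \<times> V'" by (simp add: E'_def)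
  ultimately obtain xs where xs: "distinct xs" "set xs = V'"
    "\<forall>i<length xs. \<forall>j<length xs. (xs ! i, xs ! j) \<in> E' \<longrightarrow> i < j"
    using Suc.hyps(1) by blast
  have irr: "(a, a) \<notin> E" for a using Suc.prems(2) unfolding acyclic_def by blast
  have "distinct (xs @ [z])" using xs by (simp add: V'_def)
  moreover have "set (xs @ [z]) = V" using xs z by (auto simp: V'_def)
  moreover have "\<forall>i<length (xs @ [z]). \<forall>j<length (xs @ [z]). ((xs @ [z]) ! i, (xs @ [z]) ! j) \<in> E \<longrightarrow> i < j"
  proof (intro allI impI)
    fix i j assume i: "i < length (xs @ [z])" and j: "j < length (xs @ [z])"
      and e: "((xs @ [z]) ! i, (xs @ [z]) ! j) \<in> E"
    show "i < j"
    proof (cases "i < length xs")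
      case True
      show ?thesis
      proof (cases "j < length xs")
        case True
        have "(xs ! i, xs ! j) \<in> E'" using e \<open>i < length xs\<close> True xs(2) Suc.prems(3)
          by (auto simp: nth_append E'_def)
        then show ?thesis using xs(3) \<open>i < length xs\<close> True by blast
      next
        case False
        then show ?thesis using \<open>i < length xs\<close> j by simp
      qed
    next
      case False
      then have "i = length xs" using i by simp
      then show ?thesis using e noout by (simp add: nth_append)
    qed
  qed
  ultimately show ?case by blast
qed

lemma topo_bij:
  fixes L :: nat
  assumes "acyclic E" "E \<subseteq> {0..<L} \<times> {0..<L}"
  shows "\<exists>g. bij_betw g {0..<L} {0..<L} \<and> (\<forall>p<L. \<forall>q<L. (g p, g q) \<in> E \<longrightarrow> p < q)"
proof -
  obtain xs where xs: "distinct xs" "set xs = {0..<L}"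
    "\<forall>i<length xs. \<forall>j<length xs. (xs ! i, xs ! j) \<in> E \<longrightarrow> i < j"
    using topo_list[OF finite_atLeastLessThan assms] by blast
  have len: "length xs = L" using xs(1,2) distinct_card by fastforce
  have "bij_betw ((!) xs) {..<length xs} (set xs)" by (rule bij_betw_nth[OF xs(1)]) auto
  then have "bij_betw ((!) xs) {0..<L} {0..<L}" using len xs(2) by (simp add: lessThan_atLeast0)
  then show ?thesis using xs(3) len by blast
qed

lemma sc_of_order:
  assumes U: "unambiguous \<tau>" and C: "causal \<tau>"
    and g: "bij_betw g {0..<length \<tau>} {0..<length \<tau>}"
    and ord: "\<forall>p<length \<tau>. \<forall>q<length \<tau>. (g p, g q) \<in> Ed \<tau> \<longrightarrow> p < q"
  shows "seq_consistent \<tau>"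
proof -
  let ?L = "length \<tau>"
  let ?A = "{0..<?L}"
  define f where "f = the_inv_into ?A g"
  have fb: "bij_betw f ?A ?A" unfolding f_def by (rule bij_betw_the_inv_into[OF g])
  have gi: "inj_on g ?A" using g by (simp add: bij_betw_def)
  have fi: "inj_on f ?A" using fb by (simp add: bij_betw_def)
  have gf: "g (f a) = a" if "a < ?L" for a
    unfolding f_def using g that by (intro f_the_inv_into_f) (auto simp: bij_betw_def)
  have fr: "f a < ?L" if "a < ?L" for a using fb that by (auto simp: bij_betw_def)
  have gr: "g a < ?L" if "a < ?L" for a using g that by (auto simp: bij_betw_def)
  have fg: "f (g p) = p" if "p < ?L" for p
    unfolding f_def using gi that by (intro the_inv_into_f_f) auto
  have ff: "the_inv_into ?A f p = g p" if "p < ?L" for p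
  proof -
    have "the_inv_into ?A f (f (g p)) = g p" using fi gr[OF that] by (intro the_inv_into_f_f) auto
    then show ?thesis using fg[OF that] by simp
  qed
  have edge: "f a < f b" if "(a, b) \<in> Ed \<tau>" for a b
  proof -
    have ab: "a < ?L" "b < ?L" using that by (auto simp: Ed_def)
    have "(g (f a), g (f b)) \<in> Ed \<tau>" using that gf ab by simp
    then show ?thesis using ord fr ab by blast
  qed
  have M: "\<forall>i u v. (u, v) \<in> Mp \<tau> i \<longrightarrow> f u < f v"
  proof (intro allI impI)
    fix i u v assume "(u, v) \<in> Mp \<tau> i"
    then have "(u, v) \<in> Ed \<tau>" by (auto simp: Mp_def Pp_def Ed_def)
    then show "f u < f v" by (rule edge)
  qed
  define \<sigma> where "\<sigma> = map (\<lambda>p. \<tau> ! g p) [0..<?L]"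
  have seq: "map (\<lambda>p. \<tau> ! the_inv_into ?A f p) [0..<?L] = \<sigma>"
    unfolding \<sigma>_def by (rule map_cong) (auto simp: ff)
  have sn: "\<sigma> ! p = \<tau> ! g p" if "p < ?L" for p using that by (simp add: \<sigma>_def)
  have sl: "length \<sigma> = ?L" by (simp add: \<sigma>_def)
  have kw: "key \<tau> w = 2 * Suc w" if "w < ?L" "ev_op (\<tau> ! w) = Wr" for w
    using rank_write[OF U that] that by (simp add: key_def)
  have ser: "serial \<sigma>"
    unfolding serial_def
  proof (intro allI impI)
    fix u assume u: "u < length \<sigma>"
    then have uL: "u < ?L" using sl by simp
    define z where "z = g u"
    have zL: "z < ?L" using gr[OF uL] by (simp add: z_def)
    define Up where "Up = upto_set \<sigma> u"
    have Up: "Up = {k. k \<le> u \<and> ev_op (\<tau> ! g k) = Wr \<and> ev_loc (\<tau> ! g k) = ev_loc (\<tau> ! z)}"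
      unfolding Up_def upto_set_def z_def using uL sn by (auto)
    have fU: "finite Up" unfolding Up by (rule finite_subset[of _ "{..u}"]) auto
    have "(Up = {} \<longrightarrow> ev_data (\<sigma> ! u) = 0) \<and> (Up \<noteq> {} \<longrightarrow> ev_data (\<sigma> ! u) = ev_data (\<sigma> ! Max Up))"
    proof (cases "ev_op (\<tau> ! z) = Wr")
      case True
      have "u \<in> Up" using True Up by (simp add: z_def)
      moreover have "Max Up = u" using Up fU \<open>u \<in> Up\<close> by (intro Max_eqI) auto
      ultimately show ?thesis by auto
    next
      case False
      then have rd: "ev_op (\<tau> ! z) = Rd" by simp
      have kz: "key \<tau> z = 2 * rank \<tau> z + 1" using rd by (simp add: key_def)
      have zp: "z \<in> Lp \<tau> (ev_loc (\<tau> ! z))" using zL by (simp add: Lp_def)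
      show ?thesis
      proof (cases "ev_data (\<tau> ! z) = 0")
        case True
        have "Up = {}"
        proof (rule ccontr)
          assume "Up \<noteq> {}"
          then obtain k where k: "k \<in> Up" by blast
          then have kk: "k \<le> u" "ev_op (\<tau> ! g k) = Wr" "ev_loc (\<tau> ! g k) = ev_loc (\<tau> ! z)"
            using Up by auto
          have kL: "k < ?L" using kk uL by simp
          have "key \<tau> z = 1" using kz True by (simp add: rank_def)
          moreover have "key \<tau> (g k) = 2 * Suc (g k)" using kw[OF gr[OF kL] kk(2)] .
          ultimately have "(z, g k) \<in> Ed \<tau>" using kk zL gr[OF kL] by (auto simp: Ed_def)
          then have "f z < f (g k)" by (rule edge)
          then have "u < k" using fg[OF kL] fg[OF uL] by (simp add: z_def)
          then show False using kk by simp
        qed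
        then show ?thesis using True sn[OF uL] by (simp add: z_def)
      next
        case nz: False
        obtain w where w: "w \<in> Lw \<tau> (ev_loc (\<tau> ! z))" "ev_data (\<tau> ! w) = ev_data (\<tau> ! z)"
          using exists_write[OF C zp nz] by blast
        have wL: "w < ?L" and ww: "ev_op (\<tau> ! w) = Wr" and wl: "ev_loc (\<tau> ! w) = ev_loc (\<tau> ! z)"
          using w by (auto simp: Lw_def Lp_def)
        have rz: "rank \<tau> z = Suc w" using rank_eq[OF U w] .
        define q where "q = f w"
        have qL: "q < ?L" using fr[OF wL] by (simp add: q_def)
        have gq: "g q = w" using gf[OF wL] by (simp add: q_def)
        have "(w, z) \<in> Ed \<tau>" using kw[OF wL ww] kz rz wL zL wl by (auto simp: Ed_def)
        then have "f w < f z" by (rule edge)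
        then have qu: "q < u" using fg[OF uL] by (simp add: q_def z_def)
        have qU: "q \<in> Up" using Up qu gq ww wl by simp
        have le: "k \<le> q" if "k \<in> Up" for k
        proof -
          have kk: "k \<le> u" "ev_op (\<tau> ! g k) = Wr" "ev_loc (\<tau> ! g k) = ev_loc (\<tau> ! z)"
            using that Up by auto
          have kL: "k < ?L" using kk uL by simp
          have kgk: "key \<tau> (g k) = 2 * Suc (g k)" using kw[OF gr[OF kL] kk(2)] .
          consider "g k < w" | "g k = w" | "w < g k" by linarith
          then show ?thesis
          proof cases
            case 1
            then have "(g k, w) \<in> Ed \<tau>" using kgk kw[OF wL ww] gr[OF kL] wL kk wl by (auto simp: Ed_def)
            then have "f (g k) < f w" by (rule edge)
            then show ?thesis using fg[OF kL] by (simp add: q_def)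
          next
            case 2
            then show ?thesis using fg[OF kL] by (simp add: q_def)
          next
            case 3
            then have "(z, g k) \<in> Ed \<tau>" using kgk kz rz gr[OF kL] zL kk by (auto simp: Ed_def)
            then have "f z < f (g k)" by (rule edge)
            then have "u < k" using fg[OF kL] fg[OF uL] by (simp add: z_def)
            then show ?thesis using kk by simp
          qed
        qed
        have "Max Up = q" using fU qU le by (intro Max_eqI) auto
        then show ?thesis using qU sn[OF uL] sn[OF qL] gq w(2) by (auto simp: z_def)
      qed
    qed
    then show "(upto_set \<sigma> u = {} \<longrightarrow> ev_data (\<sigma> ! u) = 0) \<and>
       (upto_set \<sigma> u \<noteq> {} \<longrightarrow> ev_data (\<sigma> ! u) = ev_data (\<sigma> ! Max (upto_set \<sigma> u)))"
      by (simp add: Up_def)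
  qed
  show ?thesis unfolding seq_consistent_def using fb M ser seq by metis
qed

lemma ren_simps[simp]:
  "ev_op (ren_data r e) = ev_op e" "ev_proc (ren_data r e) = ev_proc e"
  "ev_loc (ren_data r e) = ev_loc e" "ev_data (ren_data r e) = r (ev_loc e) (ev_data e)"
  "ev_op (ren_proc p e) = ev_op e" "ev_proc (ren_proc p e) = p (ev_proc e)"
  "ev_loc (ren_proc p e) = ev_loc e" "ev_data (ren_proc p e) = ev_data e"
  "ev_op (ren_loc l e) = ev_op e" "ev_proc (ren_loc l e) = ev_proc e"
  "ev_loc (ren_loc l e) = l (ev_loc e)" "ev_data (ren_loc l e) = ev_data e"
  by (simp_all add: ren_data_def ren_proc_def ren_loc_def ev_op_def ev_proc_def ev_loc_def ev_data_def)

lemma serial_ren: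
  assumes s: "serial \<sigma>" and l: "\<forall>e\<in>set \<sigma>. ev_loc e \<in> {1..m}" and r: "renaming m v r"
  shows "serial (map (ren_data r) \<sigma>)"
  unfolding serial_def
proof (intro allI impI)
  fix u assume u: "u < length (map (ren_data r) \<sigma>)"
  then have u': "u < length \<sigma>" by simp
  have up: "upto_set (map (ren_data r) \<sigma>) u = upto_set \<sigma> u"
    unfolding upto_set_def using u' by auto
  have lu: "ev_loc (\<sigma> ! u) \<in> {1..m}" using l u' by simp
  have su: "(upto_set \<sigma> u = {} \<longrightarrow> ev_data (\<sigma> ! u) = 0) \<and>
        (upto_set \<sigma> u \<noteq> {} \<longrightarrow> ev_data (\<sigma> ! u) = ev_data (\<sigma> ! Max (upto_set \<sigma> u)))"
    using s u' unfolding serial_def by blast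
  have fin: "finite (upto_set \<sigma> u)" unfolding upto_set_def by (rule finite_subset[of _ "{..u}"]) auto
  show "(upto_set (map (ren_data r) \<sigma>) u = {} \<longrightarrow> ev_data (map (ren_data r) \<sigma> ! u) = 0) \<and>
       (upto_set (map (ren_data r) \<sigma>) u \<noteq> {} \<longrightarrow>
        ev_data (map (ren_data r) \<sigma> ! u) = ev_data (map (ren_data r) \<sigma> ! Max (upto_set (map (ren_data r) \<sigma>) u)))"
  proof (intro conjI impI)
    assume "upto_set (map (ren_data r) \<sigma>) u = {}"
    then show "ev_data (map (ren_data r) \<sigma> ! u) = 0" using up su u' r lu by (simp add: renaming_def)
  next
    assume ne: "upto_set (map (ren_data r) \<sigma>) u \<noteq> {}"
    let ?M = "Max (upto_set \<sigma> u)"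
    have "?M \<in> upto_set \<sigma> u" using ne up fin by (intro Max_in) auto
    then have M: "?M \<le> u" "ev_loc (\<sigma> ! ?M) = ev_loc (\<sigma> ! u)" by (auto simp: upto_set_def)
    then show "ev_data (map (ren_data r) \<sigma> ! u) = ev_data (map (ren_data r) \<sigma> ! Max (upto_set (map (ren_data r) \<sigma>) u))"
      using up su ne u' by simp
  qed
qed

lemma sc_ren:
  assumes sc: "seq_consistent \<tau>" and l: "\<forall>e\<in>set \<tau>. ev_loc e \<in> {1..m}" and r: "renaming m v r"
  shows "seq_consistent (map (ren_data r) \<tau>)"
proof -
  let ?L = "length \<tau>"
  obtain f where fb: "bij_betw f {0..<?L} {0..<?L}" and M: "\<forall>i u v. (u, v) \<in> Mp \<tau> i \<longrightarrow> f u < f v"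
    and s: "serial (map (\<lambda>p. \<tau> ! the_inv_into {0..<?L} f p) [0..<?L])"
    using sc unfolding seq_consistent_def by blast
  have Mp: "Mp (map (ren_data r) \<tau>) i = Mp \<tau> i" for i by (auto simp: Mp_def Pp_def)
  have rng: "the_inv_into {0..<?L} f p < ?L" if "p < ?L" for p
    using bij_betw_the_inv_into[OF fb] that by (auto simp: bij_betw_def)
  have eq: "map (\<lambda>p. map (ren_data r) \<tau> ! the_inv_into {0..<?L} f p) [0..<?L] =
      map (ren_data r) (map (\<lambda>p. \<tau> ! the_inv_into {0..<?L} f p) [0..<?L])"
    using rng by auto
  have "\<forall>e\<in>set (map (\<lambda>p. \<tau> ! the_inv_into {0..<?L} f p) [0..<?L]). ev_loc e \<in> {1..m}"
    using rng l by auto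
  then have "serial (map (\<lambda>p. map (ren_data r) \<tau> ! the_inv_into {0..<?L} f p) [0..<?L])"
    using serial_ren[OF s _ r] eq by metis
  then show ?thesis unfolding seq_consistent_def using fb M Mp by auto
qed



datatype col = CP nat | CL nat

fun Rel :: "event list \<Rightarrow> col \<Rightarrow> (nat \<times> nat) set" where
  "Rel \<tau> (CP i) = {(a,b). a < length \<tau> \<and> b < length \<tau> \<and> ev_proc (\<tau> ! a) = i \<and> ev_proc (\<tau> ! b) = i \<and> a < b}"
| "Rel \<tau> (CL j) = {(a,b). a < length \<tau> \<and> b < length \<tau> \<and> ev_loc (\<tau> ! a) = j \<and> ev_loc (\<tau> ! b) = j \<and> key \<tau> a < key \<tau> b}"

lemma Rel_sc: "(a,b) \<in> Rel \<tau> d \<Longrightarrow> (a',b') \<in> Rel \<tau> d \<Longrightarrow> (a,b') \<in> Rel \<tau> d \<or> (a',b) \<in> Rel \<tau> d"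
  by (cases d) auto

lemma Rel_irr: "(a,a) \<notin> Rel \<tau> d"
  by (cases d) auto

lemma Ed_Rel: "(a,b) \<in> Ed \<tau> \<Longrightarrow> \<exists>d. (a,b) \<in> Rel \<tau> d"
  unfolding Ed_def by (auto intro: exI[of _ "CP (ev_proc (\<tau> ! a))"] exI[of _ "CL (ev_loc (\<tau> ! a))"])

definition isP :: "col \<Rightarrow> bool" where "isP d = (case d of CP _ \<Rightarrow> True | CL _ \<Rightarrow> False)"

lemma canon_from_min:
  assumes cw: "cw (Rel \<tau>) N x c"
    and mn: "\<forall>N' x' c'. cw (Rel \<tau>) N' x' c' \<longrightarrow> N \<le> N'"
    and c0: "isP (c 0)"
  shows "\<exists>k u v. 1 \<le> k \<and>
     (\<forall>y\<in>{1..k}. u y < length \<tau> \<and> v y < length \<tau> \<and> u y < v y \<and>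
        ev_proc (\<tau> ! u y) = ev_proc (\<tau> ! v y) \<and>
        ev_loc (\<tau> ! v y) = ev_loc (\<tau> ! u (succ_mod k y)) \<and>
        key \<tau> (v y) < key \<tau> (u (succ_mod k y))) \<and>
     inj_on (\<lambda>y. ev_proc (\<tau> ! u y)) {1..k} \<and> inj_on (\<lambda>y. ev_loc (\<tau> ! v y)) {1..k}"
proof -
  have inj: "inj_on c {0..<N}" by (rule cw_min_inj[OF cw mn Rel_sc])
  have e: "\<And>i. i < N \<Longrightarrow> (x i, x (Suc i mod N)) \<in> Rel \<tau> (c i)" using cw by (simp add: cw_def)
  have N1: "N \<ge> 1" using cw by (simp add: cw_def)
  have N2: "N \<ge> 2"
  proof (rule ccontr)
    assume "\<not> N \<ge> 2" then have "N = 1" using N1 by simp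
    then show False using e[of 0] Rel_irr by simp
  qed
  have alt: "isP (c i) \<longleftrightarrow> \<not> isP (c (Suc i mod N))" if i: "i < N" for i
  proof -
    define j where "j = Suc i mod N"
    have jN: "j < N" using N1 by (simp add: j_def)
    have ji: "j \<noteq> i"
    proof (cases "Suc i < N")
      case True then show ?thesis by (simp add: j_def)
    next
      case False then have "Suc i = N" using i by simp
      then show ?thesis using N2 by (simp add: j_def)
    qed
    have ei: "(x i, x j) \<in> Rel \<tau> (c i)" using e[OF i] by (simp add: j_def)
    have ej: "(x j, x (Suc j mod N)) \<in> Rel \<tau> (c j)" using e[OF jN] .
    have neq: "c i \<noteq> c j" using inj i jN ji by (auto dest: inj_onD)
    show ?thesis
    proof (cases "c i")
      case (CP a)
      show ?thesis
      proof (cases "c j")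
        case (CP b)
        then have "a = b" using ei ej \<open>c i = CP a\<close> by auto
        then show ?thesis using neq CP \<open>c i = CP a\<close> by simp
      next
        case (CL b) then show ?thesis using \<open>c i = CP a\<close> by (simp add: isP_def j_def)
      qed
    next
      case (CL a)
      show ?thesis
      proof (cases "c j")
        case (CL b)
        then have "a = b" using ei ej \<open>c i = CL a\<close> by auto
        then show ?thesis using neq CL \<open>c i = CL a\<close> by simp
      next
        case (CP b) then show ?thesis using \<open>c i = CL a\<close> by (simp add: isP_def j_def)
      qed
    qed
  qed
  have par: "i < N \<Longrightarrow> isP (c i) \<longleftrightarrow> even i" for i
  proof (induction i)
    case 0 then show ?case using c0 by simp
  next
    case (Suc i)
    then have "Suc i mod N = Suc i" by simp
    then show ?case using alt[of i] Suc by simp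
  qed
  have "\<not> isP (c (N - 1))" using alt[of "N - 1"] N1 c0 by simp
  then have "odd (N - 1)" using par[of "N - 1"] N1 by simp
  then have evN: "even N" using N1 by (metis Suc_diff_1 even_Suc less_le_trans zero_less_one)
  define k where "k = N div 2"
  have Nk: "N = 2 * k" using evN by (simp add: k_def)
  have k1: "1 \<le> k" using N2 Nk by simp
  define u where "u = (\<lambda>y. x (2 * y - 2))"
  define v where "v = (\<lambda>y. x (2 * y - 1))"
  have cu: "c (2 * y - 2) = CP (ev_proc (\<tau> ! u y)) \<and> u y < length \<tau> \<and> v y < length \<tau> \<and> u y < v y \<and>
        ev_proc (\<tau> ! u y) = ev_proc (\<tau> ! v y)" if y: "y \<in> {1..k}" for y
  proof -
    have lt: "2 * y - 2 < N" using y Nk by auto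
    have ev: "even (2 * y - 2)" by simp
    have sm: "Suc (2 * y - 2) mod N = 2 * y - 1" using y Nk by auto
    obtain a where a: "c (2 * y - 2) = CP a" using par[OF lt] ev by (cases "c (2 * y - 2)") (auto simp: isP_def)
    have "(u y, v y) \<in> Rel \<tau> (CP a)" using e[OF lt] sm a by (simp add: u_def v_def)
    then show ?thesis using a by auto
  qed
  have su: "x (Suc (2 * y - 1) mod N) = u (succ_mod k y)" if y: "y \<in> {1..k}" for y
  proof (cases "y < k")
    case True
    then have "Suc (2 * y - 1) mod N = 2 * y" using y Nk by auto
    moreover have "succ_mod k y = y + 1" using True by (simp add: succ_mod_def)
    ultimately show ?thesis by (simp add: u_def)
  next
    case False
    then have "y = k" using y by simp
    then have "Suc (2 * y - 1) mod N = 0" using k1 Nk by simp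
    moreover have "succ_mod k y = 1" using \<open>y = k\<close> by (simp add: succ_mod_def)
    ultimately show ?thesis by (simp add: u_def)
  qed
  have cv: "c (2 * y - 1) = CL (ev_loc (\<tau> ! v y)) \<and>
        ev_loc (\<tau> ! v y) = ev_loc (\<tau> ! u (succ_mod k y)) \<and>
        key \<tau> (v y) < key \<tau> (u (succ_mod k y))" if y: "y \<in> {1..k}" for y
  proof -
    have lt: "2 * y - 1 < N" using y Nk by auto
    have od: "odd (2 * y - 1)" using y by simp
    obtain b where b: "c (2 * y - 1) = CL b" using par[OF lt] od by (cases "c (2 * y - 1)") (auto simp: isP_def)
    have "(v y, u (succ_mod k y)) \<in> Rel \<tau> (CL b)" using e[OF lt] su[OF y] b by (simp add: v_def)
    then show ?thesis using b by auto
  qed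
  have i1: "inj_on (\<lambda>y. ev_proc (\<tau> ! u y)) {1..k}"
  proof (rule inj_onI)
    fix y y' assume y: "y \<in> {1..k}" and y': "y' \<in> {1..k}" and eq: "ev_proc (\<tau> ! u y) = ev_proc (\<tau> ! u y')"
    have "c (2 * y - 2) = c (2 * y' - 2)" using cu[OF y] cu[OF y'] eq by simp
    then have "2 * y - 2 = 2 * y' - 2" using inj y y' Nk by (auto dest: inj_onD)
    then show "y = y'" using y y' by auto
  qed
  have i2: "inj_on (\<lambda>y. ev_loc (\<tau> ! v y)) {1..k}"
  proof (rule inj_onI)
    fix y y' assume y: "y \<in> {1..k}" and y': "y' \<in> {1..k}" and eq: "ev_loc (\<tau> ! v y) = ev_loc (\<tau> ! v y')"
    have "c (2 * y - 1) = c (2 * y' - 1)" using cv[OF y] cv[OF y'] eq by simp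
    then have "2 * y - 1 = 2 * y' - 1" using inj y y' Nk by (auto dest: inj_onD)
    then show "y = y'" using y y' by simp
  qed
  show ?thesis using k1 cu cv i1 i2 by blast
qed



lemma alt_min:
  assumes cw: "cw (Rel \<tau>) N x c"
    and mn: "\<forall>N' x' c'. cw (Rel \<tau>) N' x' c' \<longrightarrow> N \<le> N'"
  shows "\<not> isP (c 0) \<Longrightarrow> isP (c (Suc 0 mod N))"
proof -
  assume nc: "\<not> isP (c 0)"
  have inj: "inj_on c {0..<N}" by (rule cw_min_inj[OF cw mn Rel_sc])
  have e: "\<And>i. i < N \<Longrightarrow> (x i, x (Suc i mod N)) \<in> Rel \<tau> (c i)" using cw by (simp add: cw_def)
  have N1: "N \<ge> 1" using cw by (simp add: cw_def)
  have N2: "N \<ge> 2"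
  proof (rule ccontr)
    assume "\<not> N \<ge> 2" then have "N = 1" using N1 by simp
    then show False using e[of 0] Rel_irr by simp
  qed
  then have j1: "Suc 0 mod N = 1" by simp
  obtain a where a: "c 0 = CL a" using nc by (cases "c 0") (auto simp: isP_def)
  have ei: "(x 0, x 1) \<in> Rel \<tau> (c 0)" using e[of 0] j1 N1 by simp
  have ej: "(x 1, x (Suc 1 mod N)) \<in> Rel \<tau> (c 1)" using e[of 1] N2 by simp
  have neq: "c 0 \<noteq> c 1"
  proof
    assume "c 0 = c 1"
    then have "(0::nat) = 1" using inj_onD[OF inj, of 0 1] N2 by simp
    then show False by simp
  qed
  show ?thesis
  proof (cases "c 1")
    case (CP b) then show ?thesis using j1 by (simp add: isP_def)
  next
    case (CL b)
    then have "a = b" using ei ej a by auto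
    then show ?thesis using neq CL a by simp
  qed
qed

lemma perm_ext:
  fixes \<alpha> \<beta> :: "nat \<Rightarrow> nat"
  assumes ia: "inj_on \<alpha> K" and ib: "inj_on \<beta> K" and sa: "\<alpha> ` K \<subseteq> T" and sb: "\<beta> ` K \<subseteq> T"
    and fT: "finite T"
  shows "\<exists>\<pi>. bij_betw \<pi> T T \<and> (\<forall>y\<in>K. \<pi> (\<alpha> y) = \<beta> y)"
proof -
  define A where "A = \<alpha> ` K"
  define B where "B = \<beta> ` K"
  have fA: "finite A" using finite_subset[OF sa fT] by (simp add: A_def)
  have fK: "finite K" using fA ia by (simp add: A_def finite_image_iff)
  have cA: "card A = card K" using ia by (simp add: A_def card_image)
  have cB: "card B = card K" using ib by (simp add: B_def card_image)
  have "card (T - A) = card (T - B)"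
    using cA cB sa sb fT by (simp add: A_def B_def card_Diff_subset finite_subset)
  then obtain h where h: "bij_betw h (T - A) (T - B)"
    using finite_same_card_bij[of "T - A" "T - B"] fT by auto
  define g where "g = \<beta> \<circ> the_inv_into K \<alpha>"
  have bA: "bij_betw \<alpha> K A" using ia by (simp add: A_def bij_betw_def)
  have bB: "bij_betw \<beta> K B" using ib by (simp add: B_def bij_betw_def)
  have g: "bij_betw g A B" unfolding g_def
    by (rule bij_betw_trans[OF bij_betw_the_inv_into[OF bA] bB])
  define \<pi> where "\<pi> = (\<lambda>z. if z \<in> A then g z else h z)"
  have p1: "bij_betw \<pi> A B" using g by (rule bij_betw_cong[THEN iffD1, rotated]) (simp add: \<pi>_def)
  have p2: "bij_betw \<pi> (T - A) (T - B)" using h by (rule bij_betw_cong[THEN iffD1, rotated]) (simp add: \<pi>_def)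
  have "bij_betw \<pi> (A \<union> (T - A)) (B \<union> (T - B))" by (rule bij_betw_combine[OF p1 p2]) auto
  moreover have "A \<union> (T - A) = T" "B \<union> (T - B) = T" using sa sb by (auto simp: A_def B_def)
  ultimately have "bij_betw \<pi> T T" by simp
  moreover have "\<forall>y\<in>K. \<pi> (\<alpha> y) = \<beta> y"
    using ia by (simp add: \<pi>_def A_def g_def the_inv_into_f_f)
  ultimately show ?thesis by blast
qed

lemma trace_ev:
  assumes "memory_system I S" "1 \<le> n" "1 \<le> m" "1 \<le> v" "\<tau> \<in> traces S n m v" "i < length \<tau>"
  shows "ev_proc (\<tau> ! i) \<in> {1..n} \<and> ev_loc (\<tau> ! i) \<in> {1..m}"
proof -
  obtain r where r: "r \<in> S n m v" "\<tau> = mem_events r" using assms(5) by (auto simp: traces_def)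
  have "r \<in> lists (alphabet I n m v)" using assms(1-4) r(1) unfolding memory_system_def by blast
  then have "set \<tau> \<subseteq> Ev n m v" using mem_events_set r(2) by blast
  then have "\<tau> ! i \<in> Ev n m v" using assms(6) nth_mem by blast
  then show ?thesis by (simp add: Ev_def)
qed

lemma trace_lists:
  assumes "memory_system I S" "1 \<le> n" "1 \<le> m" "1 \<le> v" "\<tau> \<in> traces S n m v"
  shows "\<tau> \<in> lists (Ev n m v)"
proof -
  obtain r where r: "r \<in> S n m v" "\<tau> = mem_events r" using assms(5) by (auto simp: traces_def)
  have "r \<in> lists (alphabet I n m v)" using assms(1-4) r(1) unfolding memory_system_def by blast
  then have "set \<tau> \<subseteq> Ev n m v" using mem_events_set r(2) by blast
  then show ?thesis by auto
qed

lemma causal_of: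
  assumes "causality S" "1 \<le> n" "1 \<le> m" "1 \<le> v" "\<tau> \<in> traces S n m v"
  shows "causal \<tau>"
  using assms unfolding causality_def causal_def by blast

lemma traces_nm_I: "\<tau> \<in> traces S n m v \<Longrightarrow> 1 \<le> v \<Longrightarrow> \<tau> \<in> traces_nm S n m"
  by (auto simp: traces_nm_def)

lemma sw_Om:
  assumes "simple_witness S n m \<Omega>" "\<tau> \<in> traces_nm S n m" "j \<in> {1..m}"
  shows "\<Omega> \<tau> j = {(a,b). a \<in> Lw \<tau> j \<and> b \<in> Lw \<tau> j \<and> a < b}"
proof -
  have sub: "\<Omega> \<tau> j \<subseteq> Lw \<tau> j \<times> Lw \<tau> j" using assms unfolding simple_witness_def witness_def by blast
  have iff: "\<forall>x\<in>Lw \<tau> j. \<forall>y\<in>Lw \<tau> j. (x, y) \<in> \<Omega> \<tau> j \<longleftrightarrow> x < y"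
    using assms unfolding simple_witness_def by blast
  show ?thesis using sub iff by auto
qed

lemma succ_mod_range: "y \<in> {1..k} \<Longrightarrow> succ_mod k y \<in> {1..k}"
  unfolding succ_mod_def by simp

lemma succ_mod_inj: "inj_on (succ_mod k) {1..k}"
proof (rule inj_onI)
  fix x y assume "x \<in> {1..k}" "y \<in> {1..k}" "succ_mod k x = succ_mod k y"
  then show "x = y" unfolding succ_mod_def by (cases "x < k"; cases "y < k") simp_all
qed


lemma walk_of_cycle:
  assumes "\<not> acyclic (Ed \<tau>)"
  shows "\<exists>N x c. cw (Rel \<tau>) N x c"
proof -
  obtain z where "(z, z) \<in> (Ed \<tau>)\<^sup>+" using assms unfolding acyclic_def by blast
  then obtain N where N: "N > 0" "(z, z) \<in> (Ed \<tau>) ^^ N" using trancl_power by blast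
  then obtain f where f: "f 0 = z" "f N = z" "\<forall>i<N. (f i, f (Suc i)) \<in> Ed \<tau>"
    using relpow_fun_conv by metis
  define c where "c = (\<lambda>i. SOME d. (f i, f (Suc i)) \<in> Rel \<tau> d)"
  have "cw (Rel \<tau>) N f c"
    unfolding cw_def
  proof (intro conjI allI impI)
    show "1 \<le> N" using N by simp
    fix i assume i: "i < N"
    have "\<exists>d. (f i, f (Suc i)) \<in> Rel \<tau> d" using Ed_Rel f(3) i by blast
    then have r: "(f i, f (Suc i)) \<in> Rel \<tau> (c i)" unfolding c_def by (rule someI_ex)
    show "(f i, f (Suc i mod N)) \<in> Rel \<tau> (c i)"
    proof (cases "Suc i < N")
      case True then show ?thesis using r by simp
    next
      case False then have "Suc i = N" using i by simp
      then show ?thesis using r f(1,2) by simp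
    qed
  qed
  then show ?thesis by blast
qed

lemma canon_walk:
  assumes "\<not> acyclic (Ed \<tau>)"
  shows "\<exists>k u v. 1 \<le> k \<and>
     (\<forall>y\<in>{1..k}. u y < length \<tau> \<and> v y < length \<tau> \<and> u y < v y \<and>
        ev_proc (\<tau> ! u y) = ev_proc (\<tau> ! v y) \<and>
        ev_loc (\<tau> ! v y) = ev_loc (\<tau> ! u (succ_mod k y)) \<and>
        key \<tau> (v y) < key \<tau> (u (succ_mod k y))) \<and>
     inj_on (\<lambda>y. ev_proc (\<tau> ! u y)) {1..k} \<and> inj_on (\<lambda>y. ev_loc (\<tau> ! v y)) {1..k}"
proof -
  obtain N0 x0 c0 where w: "cw (Rel \<tau>) N0 x0 c0" using walk_of_cycle[OF assms] by blast
  obtain N x c where cw: "cw (Rel \<tau>) N x c" and mn: "\<forall>N' x' c'. cw (Rel \<tau>) N' x' c' \<longrightarrow> N \<le> N'"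
    using cw_min[OF w] by blast
  show ?thesis
  proof (cases "isP (c 0)")
    case True
    show ?thesis by (rule canon_from_min[OF cw mn True])
  next
    case False
    have r: "cw (Rel \<tau>) N (\<lambda>i. x ((i + 1) mod N)) (\<lambda>i. c ((i + 1) mod N))" by (rule cw_rotate[OF cw])
    have "isP ((\<lambda>i. c ((i + 1) mod N)) 0)" using alt_min[OF cw mn False] by simp
    then show ?thesis by (rule canon_from_min[OF r mn])
  qed
qed



lemma acyc:
  assumes MS: "memory_system I S" and CA: "causality S"
    and PS: "processor_symmetry S" and LS: "location_symmetry S"
    and n: "1 \<le> n" and m: "1 \<le> m"
    and SW: "simple_witness S n m \<Omega>"
    and NC: "\<forall>\<tau>\<in>traces_nm S n m. unambiguous \<tau> \<longrightarrow>
              (\<forall>k\<in>{1..min n m}. \<not> has_canonical_nice_cycle \<Omega> \<tau> k)"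
    and tr: "\<tau> \<in> traces S n m v" and v: "1 \<le> v" and U: "unambiguous \<tau>"
  shows "acyclic (Ed \<tau>)"
proof (rule ccontr)
  assume "\<not> acyclic (Ed \<tau>)"
  then obtain k u v' where k1: "1 \<le> k"
    and P: "\<forall>y\<in>{1..k}. u y < length \<tau> \<and> v' y < length \<tau> \<and> u y < v' y \<and>
        ev_proc (\<tau> ! u y) = ev_proc (\<tau> ! v' y) \<and>
        ev_loc (\<tau> ! v' y) = ev_loc (\<tau> ! u (succ_mod k y)) \<and>
        key \<tau> (v' y) < key \<tau> (u (succ_mod k y))"
    and ia: "inj_on (\<lambda>y. ev_proc (\<tau> ! u y)) {1..k}" and ib: "inj_on (\<lambda>y. ev_loc (\<tau> ! v' y)) {1..k}"
    using canon_walk by blast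
  let ?L = "length \<tau>"
  let ?K = "{1..k}"
  define \<alpha> where "\<alpha> = (\<lambda>y. ev_proc (\<tau> ! u y))"
  define \<beta> where "\<beta> = (\<lambda>y. ev_loc (\<tau> ! v' y))"
  have ev: "\<And>i. i < ?L \<Longrightarrow> ev_proc (\<tau> ! i) \<in> {1..n} \<and> ev_loc (\<tau> ! i) \<in> {1..m}"
    using trace_ev[OF MS n m v tr] by blast
  have sa: "\<alpha> ` ?K \<subseteq> {1..n}"
  proof (rule image_subsetI)
    fix y assume "y \<in> ?K" then have "u y < ?L" using P by blast
    then show "\<alpha> y \<in> {1..n}" using ev unfolding \<alpha>_def by blast
  qed
  have sb: "\<beta> ` ?K \<subseteq> {1..m}"
  proof (rule image_subsetI)
    fix y assume "y \<in> ?K" then have "v' y < ?L" using P by blast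
    then show "\<beta> y \<in> {1..m}" using ev unfolding \<beta>_def by blast
  qed
  have ia': "inj_on \<alpha> ?K" using ia by (simp add: \<alpha>_def)
  have ib': "inj_on \<beta> ?K" using ib by (simp add: \<beta>_def)
  have kn: "k \<le> n" using card_inj_on_le[OF ia' sa] by simp
  have km: "k \<le> m" using card_inj_on_le[OF ib' sb] by simp
  obtain \<pi>p where pp: "bij_betw \<pi>p {1..n} {1..n}" and pa: "\<forall>y\<in>?K. \<pi>p (\<alpha> y) = y"
    using perm_ext[OF ia' inj_on_id[of ?K] sa _ finite_atLeastAtMost] kn by auto
  obtain \<pi>l where pl: "bij_betw \<pi>l {1..m} {1..m}" and pb: "\<forall>y\<in>?K. \<pi>l (\<beta> y) = succ_mod k y"
    using perm_ext[OF ib' succ_mod_inj[of k] sb _ finite_atLeastAtMost] km succ_mod_range[of _ k]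
    by force
  define \<tau>2 where "\<tau>2 = map (ren_loc \<pi>l) (map (ren_proc \<pi>p) \<tau>)"
  have tr2: "\<tau>2 \<in> traces S n m v"
  proof -
    have "map (ren_proc \<pi>p) \<tau> \<in> traces S n m v"
      using PS n m v pp tr unfolding processor_symmetry_def by blast
    then show ?thesis using LS n m v pl unfolding location_symmetry_def \<tau>2_def by blast
  qed
  have tnm2: "\<tau>2 \<in> traces_nm S n m" by (rule traces_nm_I[OF tr2 v])
  have len2: "length \<tau>2 = ?L" by (simp add: \<tau>2_def)
  have nth2: "\<And>i. i < ?L \<Longrightarrow> ev_op (\<tau>2 ! i) = ev_op (\<tau> ! i) \<and> ev_proc (\<tau>2 ! i) = \<pi>p (ev_proc (\<tau> ! i))
      \<and> ev_loc (\<tau>2 ! i) = \<pi>l (ev_loc (\<tau> ! i)) \<and> ev_data (\<tau>2 ! i) = ev_data (\<tau> ! i)"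
    by (simp add: \<tau>2_def)
  have plinj: "inj_on \<pi>l {1..m}" using pl by (simp add: bij_betw_def)
  have Lw2: "Lw \<tau>2 (\<pi>l j) = Lw \<tau> j" if j: "j \<in> {1..m}" for j
  proof (rule set_eqI)
    fix w
    show "w \<in> Lw \<tau>2 (\<pi>l j) \<longleftrightarrow> w \<in> Lw \<tau> j"
    proof
      assume "w \<in> Lw \<tau>2 (\<pi>l j)"
      then have w: "w < ?L" "\<pi>l (ev_loc (\<tau> ! w)) = \<pi>l j" "ev_op (\<tau> ! w) = Wr"
        using nth2 len2 by (auto simp: Lw_def Lp_def)
      then have "ev_loc (\<tau> ! w) = j" using inj_onD[OF plinj w(2)] ev[OF w(1)] j by blast
      then show "w \<in> Lw \<tau> j" using w by (simp add: Lw_def Lp_def)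
    next
      assume "w \<in> Lw \<tau> j"
      then show "w \<in> Lw \<tau>2 (\<pi>l j)" using nth2 len2 by (auto simp: Lw_def Lp_def)
    qed
  qed
  have Lw2x: "Lw \<tau>2 (ev_loc (\<tau>2 ! x)) = Lw \<tau> (ev_loc (\<tau> ! x))" if "x < ?L" for x
    using Lw2[of "ev_loc (\<tau> ! x)"] ev[OF that] nth2[OF that] by simp
  have U2: "unambiguous \<tau>2"
    unfolding unambiguous_def
  proof (intro allI ballI conjI)
    fix j x assume x: "x \<in> Lw \<tau>2 j"
    then have xL: "x < ?L" and jx: "j = ev_loc (\<tau>2 ! x)" using len2 by (auto simp: Lw_def Lp_def)
    have eqs: "Lw \<tau>2 j = Lw \<tau> (ev_loc (\<tau> ! x))" using Lw2x[OF xL] jx by simp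
    have x1: "x \<in> Lw \<tau> (ev_loc (\<tau> ! x))" using x eqs by simp
    show "ev_data (\<tau>2 ! x) \<noteq> 0" using U x1 nth2[OF xL] unfolding unambiguous_def by auto
    fix y assume y: "y \<in> Lw \<tau>2 j - {x}"
    then have yL: "y < ?L" using len2 by (auto simp: Lw_def Lp_def)
    have y1: "y \<in> Lw \<tau> (ev_loc (\<tau> ! x)) - {x}" using y eqs by simp
    have "ev_data (\<tau> ! x) \<noteq> ev_data (\<tau> ! y)"
      using U x1 y1 unfolding unambiguous_def by blast
    then show "ev_data (\<tau>2 ! x) \<noteq> ev_data (\<tau>2 ! y)"
      using nth2[OF xL] nth2[OF yL] by simp
  qed
  have key2: "key \<tau>2 x = key \<tau> x" if xL: "x < ?L" for x
  proof -
    have "(\<lambda>w. w \<in> Lw \<tau>2 (ev_loc (\<tau>2 ! x)) \<and> ev_data (\<tau>2 ! w) = ev_data (\<tau>2 ! x)) =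
          (\<lambda>w. w \<in> Lw \<tau> (ev_loc (\<tau> ! x)) \<and> ev_data (\<tau> ! w) = ev_data (\<tau> ! x))"
    proof (rule ext)
      fix w
      show "(w \<in> Lw \<tau>2 (ev_loc (\<tau>2 ! x)) \<and> ev_data (\<tau>2 ! w) = ev_data (\<tau>2 ! x)) =
          (w \<in> Lw \<tau> (ev_loc (\<tau> ! x)) \<and> ev_data (\<tau> ! w) = ev_data (\<tau> ! x))"
      proof -
        have a: "w \<in> Lw \<tau>2 (ev_loc (\<tau>2 ! x)) \<longleftrightarrow> w \<in> Lw \<tau> (ev_loc (\<tau> ! x))"
          using Lw2x[OF xL] by simp
        have b: "w \<in> Lw \<tau> (ev_loc (\<tau> ! x)) \<Longrightarrow> ev_data (\<tau>2 ! w) = ev_data (\<tau> ! w)"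
        proof -
          assume "w \<in> Lw \<tau> (ev_loc (\<tau> ! x))"
          then have "w < ?L" by (simp add: Lw_def Lp_def)
          then show ?thesis using nth2 by blast
        qed
        have c: "ev_data (\<tau>2 ! x) = ev_data (\<tau> ! x)" using nth2[OF xL] by blast
        show ?thesis using a b c by auto
      qed
    qed
    then have "rank \<tau>2 x = rank \<tau> x" unfolding rank_def using nth2[OF xL] by simp
    then show ?thesis unfolding key_def using nth2[OF xL] by simp
  qed
  have C2: "causal \<tau>2" by (rule causal_of[OF CA n m v tr2])
  have cyc: "canonical_nice_cycle \<Omega> \<tau>2 k u v'"
    unfolding canonical_nice_cycle_def
  proof (intro conjI ballI)
    show "inj_on u ?K"
    proof (rule inj_onI)
      fix y y' assume "y \<in> ?K" "y' \<in> ?K" "u y = u y'"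
      then show "y = y'" using inj_onD[OF ia'] by (simp add: \<alpha>_def)
    qed
    show "inj_on v' ?K"
    proof (rule inj_onI)
      fix y y' assume y: "y \<in> ?K" "y' \<in> ?K" "v' y = v' y'"
      then have "\<alpha> y = \<alpha> y'" using P by (simp add: \<alpha>_def)
      then show "y = y'" using inj_onD[OF ia'] y by blast
    qed
    show "u ` ?K \<inter> v' ` ?K = {}"
    proof (rule ccontr)
      assume "u ` ?K \<inter> v' ` ?K \<noteq> {}"
      then obtain y y' where y: "y \<in> ?K" "y' \<in> ?K" "u y = v' y'" by blast
      then have "\<alpha> y = \<alpha> y'" using P by (simp add: \<alpha>_def)
      then have "y = y'" using inj_onD[OF ia'] y by blast
      then show False using P y by fastforce
    qed
    fix y assume y: "y \<in> ?K"
    have Py: "u y < ?L" "v' y < ?L" "u y < v' y" "ev_proc (\<tau> ! u y) = ev_proc (\<tau> ! v' y)"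
        "ev_loc (\<tau> ! v' y) = ev_loc (\<tau> ! u (succ_mod k y))" "key \<tau> (v' y) < key \<tau> (u (succ_mod k y))"
      using P y by auto
    have sy: "succ_mod k y \<in> ?K" using succ_mod_range[OF y] .
    have us: "u (succ_mod k y) < ?L" using P sy by blast
    have pu: "\<pi>p (ev_proc (\<tau> ! u y)) = y" using pa y by (simp add: \<alpha>_def)
    have p1: "ev_proc (\<tau>2 ! u y) = y" using nth2[OF Py(1)] pu by simp
    have p2: "ev_proc (\<tau>2 ! v' y) = y" using nth2[OF Py(2)] pu Py(4) by simp
    show "(u y, v' y) \<in> Mp \<tau>2 y"
      using Py(1,2,3) p1 p2 len2 by (simp add: Mp_def Pp_def)
    have sm: "succ_mod k y \<in> {1..m}" using sy km by auto
    have Om: "\<Omega> \<tau>2 (succ_mod k y) = {(a,b). a \<in> Lw \<tau>2 (succ_mod k y) \<and> b \<in> Lw \<tau>2 (succ_mod k y) \<and> a < b}"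
      by (rule sw_Om[OF SW tnm2 sm])
    have pbv: "\<pi>l (ev_loc (\<tau> ! v' y)) = succ_mod k y" using pb y by (simp add: \<beta>_def)
    have l1: "ev_loc (\<tau>2 ! v' y) = succ_mod k y" using nth2[OF Py(2)] pbv by simp
    have "ev_loc (\<tau>2 ! u (succ_mod k y)) = \<pi>l (ev_loc (\<tau> ! v' y))" using nth2[OF us] Py(5) by simp
    then have l2: "ev_loc (\<tau>2 ! u (succ_mod k y)) = succ_mod k y" using pbv by simp
    show "(v' y, u (succ_mod k y)) \<in> Omega_e \<Omega> \<tau>2 (succ_mod k y)"
      unfolding Oe_char[of \<tau>2 \<Omega> "succ_mod k y", OF U2 C2 Om]
      using l1 l2 Py(2,6) us key2[OF Py(2)] key2[OF us] len2 by (simp add: Lp_def)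
  qed
  have "k \<in> {1..min n m}" using k1 kn km by simp
  then show False using NC tnm2 U2 cyc unfolding has_canonical_nice_cycle_def by blast
qed



theorem corollary7p6:
  fixes I :: "nat \<Rightarrow> nat \<Rightarrow> nat \<Rightarrow> 'i set"
    and S :: "nat \<Rightarrow> nat \<Rightarrow> nat \<Rightarrow> 'i letter list set"
    and n m :: nat
  assumes "memory_system I S"
    and "causality S"
    and "data_independence S"
    and "processor_symmetry S"
    and "location_symmetry S"
    and "n \<ge> 1" and "m \<ge> 1"
    and "\<exists>\<Omega>. simple_witness S n m \<Omega> \<and>
           (\<forall>\<tau>\<in>traces_nm S n m. unambiguous \<tau> \<longrightarrow>
              (\<forall>k\<in>{1..min n m}. \<not> has_canonical_nice_cycle \<Omega> \<tau> k))"
  shows "\<forall>\<tau>\<in>traces_nm S n m. seq_consistent \<tau>"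
proof -
  obtain \<Omega> where SW: "simple_witness S n m \<Omega>" and NC: "\<forall>\<tau>\<in>traces_nm S n m. unambiguous \<tau> \<longrightarrow>
              (\<forall>k\<in>{1..min n m}. \<not> has_canonical_nice_cycle \<Omega> \<tau> k)"
    using assms(8) by blast
  show ?thesis
  proof
    fix \<tau> assume "\<tau> \<in> traces_nm S n m"
    then obtain v where v1: "1 \<le> v" and tv: "\<tau> \<in> traces S n m v" by (auto simp: traces_nm_def)
    have "\<tau> \<in> lists (Ev n m v)" by (rule trace_lists[OF assms(1,6,7) v1 tv])
    then obtain \<tau>' r where t': "\<tau>' \<in> traces_nm S n m" "unambiguous \<tau>'" "renaming m v r"
        "\<tau> = map (ren_data r) \<tau>'"
      using assms(3,6,7) v1 tv unfolding data_independence_def by blast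
    obtain v' where v1': "1 \<le> v'" and tv': "\<tau>' \<in> traces S n m v'" using t'(1) by (auto simp: traces_nm_def)
    have ac: "acyclic (Ed \<tau>')"
      by (rule acyc[OF assms(1,2,4,5,6,7) SW NC tv' v1' t'(2)])
    have sub: "Ed \<tau>' \<subseteq> {0..<length \<tau>'} \<times> {0..<length \<tau>'}" by (auto simp: Ed_def)
    obtain g where g: "bij_betw g {0..<length \<tau>'} {0..<length \<tau>'}"
      and go: "\<forall>p<length \<tau>'. \<forall>q<length \<tau>'. (g p, g q) \<in> Ed \<tau>' \<longrightarrow> p < q"
      using topo_bij[OF ac sub] by blast
    have C': "causal \<tau>'" by (rule causal_of[OF assms(2,6,7) v1' tv'])
    have sc': "seq_consistent \<tau>'" by (rule sc_of_order[OF t'(2) C' g go])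
    have locs: "\<forall>e\<in>set \<tau>'. ev_loc e \<in> {1..m}"
    proof
      fix e assume "e \<in> set \<tau>'"
      then obtain i where i: "i < length \<tau>'" "e = \<tau>' ! i" by (auto simp: in_set_conv_nth)
      then show "ev_loc e \<in> {1..m}" using trace_ev[OF assms(1,6,7) v1' tv' i(1)] by simp
    qed
    show "seq_consistent \<tau>" using sc_ren[OF sc' locs t'(3)] t'(4) by simp
  qed
qed


end
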